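(* Let $\mathbf A=(A,\wedge,\vee,\cdot,1,\sim,-)$ be a DInFL-algebra and $W_{\mathbf A}$ the set of generalised prime filters of its lattice reduct. For $F,G\in W_{\mathbf A}$ define: $F\in\mathcal I$ iff $1\in F$; $F\preccurlyeq G$ iff $F\subseteq G$; $F\bullet G=\{H\in W_{\mathbf A}\mid F\cdot G\subseteq H\}$ where $F\cdot G=\{a\cdot b\mid a\in F,b\in G\}$; $F^\sim=\{{\sim}a\mid a\notin F\}$; $F^-=\{-a\mid a\notin F\}$. Then $(W_{\mathbf A},\mathcal I,\preccurlyeq,\bullet,{}^\sim,{}^-)$ is a DInFL-frame whose poset has least element $\varnothing$ and greatest element $A$, and in which $\mathcal I$ is a proper non-empty upset; i.e. it is a doubly-pointed DInFL-frame with bounds $\varnothing$ and $A$.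
   Context: An InFL-algebra is $(A,\wedge,\vee,\cdot,1,\sim,-)$ with a lattice, a monoid, and $a\cdot b\leqslant c\iff a\leqslant -(b\cdot{\sim}c)\iff b\leqslant{\sim}(-c\cdot a)$; DInFL means distributive lattice reduct. A generalised prime filter is a prime filter, or $A$, or $\varnothing$. For a set $W$ and $\circ:W\times W\to\mathcal P(W)$, $U\circ V=\bigcup\{a\circ b\mid a\in U,b\in V\}$, $x\circ V=\{x\}\circ V$, $U\circ y=U\circ\{y\}$; $x^{\sim-}$ means $(x^\sim)^-$. A DInFL-frame is a tuple $(W,I,\preccurlyeq,\circ,{}^\sim,{}^-)$ with $I\subseteq W$, $\preccurlyeq$ a partial order, $\circ:W\times W\to\mathcal P(W)$, ${}^\sim,{}^-:W\to W$, such that for all $u,v,x,y,z$: (F1) $x\preccurlyeq y$ iff $y\in I\circ x$ iff $y\in x\circ I$; (F2) $x\preccurlyeq y$, $x\in I$ imply $y\in I$; (F3) $x\preccurlyeq y$, $x\in u\circ v$ imply $y\in u\circ v$; (F4) $(x\circ y)\circ z=x\circ(y\circ z)$; (F5) $z^\sim\in x\circ y$ iff $y^-\in z\circ x$; (F6) $x^{\sim-}\preccurlyeq x$ and $x^{-\sim}\preccurlyeq x$. A doubly-pointed DInFL-frame is a DInFL-frame whose poset is bounded and whose set $I$ is a proper non-empty upset. *)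

theory Defs
  imports Main
begin

text \<open>An algebra (A, meet, join, mult, one, tld, mn) whose universe is the whole type 'a.
  tld is the involution written with a tilde, mn the one written with a minus.\<close>

definition lat_le :: "('a \<Rightarrow> 'a \<Rightarrow> 'a) \<Rightarrow> 'a \<Rightarrow> 'a \<Rightarrow> bool" where
  "lat_le meet a b \<longleftrightarrow> meet a b = a"

definition is_lattice :: "('a \<Rightarrow> 'a \<Rightarrow> 'a) \<Rightarrow> ('a \<Rightarrow> 'a \<Rightarrow> 'a) \<Rightarrow> bool" where
  "is_lattice meet join \<longleftrightarrow>
     (\<forall>a b c. meet (meet a b) c = meet a (meet b c)) \<and>
     (\<forall>a b c. join (join a b) c = join a (join b c)) \<and>
     (\<forall>a b. meet a b = meet b a) \<and>
     (\<forall>a b. join a b = join b a) \<and>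
     (\<forall>a. meet a a = a) \<and>
     (\<forall>a. join a a = a) \<and>
     (\<forall>a b. meet a (join a b) = a) \<and>
     (\<forall>a b. join a (meet a b) = a)"

definition is_monoid :: "('a \<Rightarrow> 'a \<Rightarrow> 'a) \<Rightarrow> 'a \<Rightarrow> bool" where
  "is_monoid mult one \<longleftrightarrow>
     (\<forall>a b c. mult (mult a b) c = mult a (mult b c)) \<and>
     (\<forall>a. mult one a = a) \<and> (\<forall>a. mult a one = a)"

definition InFL_algebra ::
  "('a \<Rightarrow> 'a \<Rightarrow> 'a) \<Rightarrow> ('a \<Rightarrow> 'a \<Rightarrow> 'a) \<Rightarrow> ('a \<Rightarrow> 'a \<Rightarrow> 'a) \<Rightarrow> 'a
   \<Rightarrow> ('a \<Rightarrow> 'a) \<Rightarrow> ('a \<Rightarrow> 'a) \<Rightarrow> bool" where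
  "InFL_algebra meet join mult one tld mn \<longleftrightarrow>
     is_lattice meet join \<and> is_monoid mult one \<and>
     (\<forall>a b c. (lat_le meet (mult a b) c \<longleftrightarrow> lat_le meet a (mn (mult b (tld c)))) \<and>
              (lat_le meet a (mn (mult b (tld c))) \<longleftrightarrow> lat_le meet b (tld (mult (mn c) a))))"

definition DInFL_algebra ::
  "('a \<Rightarrow> 'a \<Rightarrow> 'a) \<Rightarrow> ('a \<Rightarrow> 'a \<Rightarrow> 'a) \<Rightarrow> ('a \<Rightarrow> 'a \<Rightarrow> 'a) \<Rightarrow> 'a
   \<Rightarrow> ('a \<Rightarrow> 'a) \<Rightarrow> ('a \<Rightarrow> 'a) \<Rightarrow> bool" where
  "DInFL_algebra meet join mult one tld mn \<longleftrightarrow>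
     InFL_algebra meet join mult one tld mn \<and>
     (\<forall>a b c. meet a (join b c) = join (meet a b) (meet a c))"

definition prime_filter :: "('a \<Rightarrow> 'a \<Rightarrow> 'a) \<Rightarrow> ('a \<Rightarrow> 'a \<Rightarrow> 'a) \<Rightarrow> 'a set \<Rightarrow> bool" where
  "prime_filter meet join F \<longleftrightarrow>
     F \<noteq> {} \<and> F \<noteq> UNIV \<and>
     (\<forall>a b. a \<in> F \<and> lat_le meet a b \<longrightarrow> b \<in> F) \<and>
     (\<forall>a b. a \<in> F \<and> b \<in> F \<longrightarrow> meet a b \<in> F) \<and>
     (\<forall>a b. join a b \<in> F \<longrightarrow> a \<in> F \<or> b \<in> F)"

definition gen_prime_filters :: "('a \<Rightarrow> 'a \<Rightarrow> 'a) \<Rightarrow> ('a \<Rightarrow> 'a \<Rightarrow> 'a) \<Rightarrow> 'a set set" where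
  "gen_prime_filters meet join = {F. prime_filter meet join F \<or> F = UNIV \<or> F = {}}"

definition set_op :: "('w \<Rightarrow> 'w \<Rightarrow> 'w set) \<Rightarrow> 'w set \<Rightarrow> 'w set \<Rightarrow> 'w set" where
  "set_op c U V = \<Union>{c a b | a b. a \<in> U \<and> b \<in> V}"

definition DInFL_frame ::
  "'w set \<Rightarrow> 'w set \<Rightarrow> ('w \<Rightarrow> 'w \<Rightarrow> bool) \<Rightarrow> ('w \<Rightarrow> 'w \<Rightarrow> 'w set)
   \<Rightarrow> ('w \<Rightarrow> 'w) \<Rightarrow> ('w \<Rightarrow> 'w) \<Rightarrow> bool" where
  "DInFL_frame W I le c tld mn \<longleftrightarrow>
     I \<subseteq> W \<and>
     \<comment> \<open>partial order on W\<close>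
     (\<forall>x\<in>W. le x x) \<and>
     (\<forall>x\<in>W. \<forall>y\<in>W. le x y \<and> le y x \<longrightarrow> x = y) \<and>
     (\<forall>x\<in>W. \<forall>y\<in>W. \<forall>z\<in>W. le x y \<and> le y z \<longrightarrow> le x z) \<and>
     \<comment> \<open>typing: c maps into P(W), tld and mn map W to W\<close>
     (\<forall>x\<in>W. \<forall>y\<in>W. c x y \<subseteq> W) \<and>
     (\<forall>x\<in>W. tld x \<in> W) \<and> (\<forall>x\<in>W. mn x \<in> W) \<and>
     \<comment> \<open>F1\<close>
     (\<forall>x\<in>W. \<forall>y\<in>W. (le x y \<longleftrightarrow> y \<in> set_op c I {x}) \<and> (y \<in> set_op c I {x} \<longleftrightarrow> y \<in> set_op c {x} I)) \<and>
     \<comment> \<open>F2\<close>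
     (\<forall>x\<in>W. \<forall>y\<in>W. le x y \<and> x \<in> I \<longrightarrow> y \<in> I) \<and>
     \<comment> \<open>F3\<close>
     (\<forall>u\<in>W. \<forall>v\<in>W. \<forall>x\<in>W. \<forall>y\<in>W. le x y \<and> x \<in> c u v \<longrightarrow> y \<in> c u v) \<and>
     \<comment> \<open>F4\<close>
     (\<forall>x\<in>W. \<forall>y\<in>W. \<forall>z\<in>W. set_op c (c x y) {z} = set_op c {x} (c y z)) \<and>
     \<comment> \<open>F5\<close>
     (\<forall>x\<in>W. \<forall>y\<in>W. \<forall>z\<in>W. tld z \<in> c x y \<longleftrightarrow> mn y \<in> c z x) \<and>
     \<comment> \<open>F6\<close>
     (\<forall>x\<in>W. le (mn (tld x)) x \<and> le (tld (mn x)) x)"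

definition doubly_pointed_DInFL_frame_with_bounds ::
  "'w set \<Rightarrow> 'w set \<Rightarrow> ('w \<Rightarrow> 'w \<Rightarrow> bool) \<Rightarrow> ('w \<Rightarrow> 'w \<Rightarrow> 'w set)
   \<Rightarrow> ('w \<Rightarrow> 'w) \<Rightarrow> ('w \<Rightarrow> 'w) \<Rightarrow> 'w \<Rightarrow> 'w \<Rightarrow> bool" where
  "doubly_pointed_DInFL_frame_with_bounds W I le c tld mn bt tp \<longleftrightarrow>
     DInFL_frame W I le c tld mn \<and>
     bt \<in> W \<and> tp \<in> W \<and> (\<forall>x\<in>W. le bt x \<and> le x tp) \<and>
     I \<noteq> {} \<and> I \<noteq> W \<and> (\<forall>x\<in>I. \<forall>y\<in>W. le x y \<longrightarrow> y \<in> I)"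

definition cfI :: "('a \<Rightarrow> 'a \<Rightarrow> 'a) \<Rightarrow> ('a \<Rightarrow> 'a \<Rightarrow> 'a) \<Rightarrow> 'a \<Rightarrow> 'a set set" where
  "cfI meet join one = {F \<in> gen_prime_filters meet join. one \<in> F}"

definition cf_circ :: "('a \<Rightarrow> 'a \<Rightarrow> 'a) \<Rightarrow> ('a \<Rightarrow> 'a \<Rightarrow> 'a) \<Rightarrow> ('a \<Rightarrow> 'a \<Rightarrow> 'a)
   \<Rightarrow> 'a set \<Rightarrow> 'a set \<Rightarrow> 'a set set" where
  "cf_circ meet join mult F G =
     {H \<in> gen_prime_filters meet join. {mult a b | a b. a \<in> F \<and> b \<in> G} \<subseteq> H}"

definition cf_neg :: "('a \<Rightarrow> 'a) \<Rightarrow> 'a set \<Rightarrow> 'a set" where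
  "cf_neg n F = {n a | a. a \<notin> F}"

end

theory Submission
  imports Defs
begin

locale dinfl =
  fixes meet join mult :: "'a \<Rightarrow> 'a \<Rightarrow> 'a" and one :: 'a and tld mn :: "'a \<Rightarrow> 'a"
  assumes A: "DInFL_algebra meet join mult one tld mn"
begin

abbreviation le where "le \<equiv> lat_le meet"

lemma lat: "is_lattice meet join" and mon: "is_monoid mult one"
  and res: "\<And>a b c. (le (mult a b) c \<longleftrightarrow> le a (mn (mult b (tld c))))"
  and res': "\<And>a b c. (le a (mn (mult b (tld c))) \<longleftrightarrow> le b (tld (mult (mn c) a)))"
  and distr: "\<And>a b c. meet a (join b c) = join (meet a b) (meet a c)"
  using A unfolding DInFL_algebra_def InFL_algebra_def by auto

lemma massoc: "meet (meet a b) c = meet a (meet b c)" and jassoc: "join (join a b) c = join a (join b c)"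
  and mcomm: "meet a b = meet b a" and jcomm: "join a b = join b a"
  and midem: "meet a a = a" and jidem: "join a a = a"
  and abs1: "meet a (join a b) = a" and abs2: "join a (meet a b) = a"
  using lat unfolding is_lattice_def by auto

lemma passoc: "mult (mult a b) c = mult a (mult b c)" and one_l: "mult one a = a" and one_r: "mult a one = a"
  using mon unfolding is_monoid_def by auto

lemma le_refl: "le a a" by (simp add: lat_le_def midem)
lemma le_antisym: "le a b \<Longrightarrow> le b a \<Longrightarrow> a = b" by (metis lat_le_def mcomm)
lemma le_trans: "le a b \<Longrightarrow> le b c \<Longrightarrow> le a c" by (metis lat_le_def massoc)
lemma meet_le1: "le (meet a b) a" by (metis lat_le_def massoc mcomm midem)
lemma meet_le2: "le (meet a b) b" by (metis meet_le1 mcomm)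
lemma meet_glb: "le c a \<Longrightarrow> le c b \<Longrightarrow> le c (meet a b)" by (metis lat_le_def massoc)
lemma le_join_iff: "le a c \<longleftrightarrow> join a c = c" by (metis abs1 abs2 jcomm lat_le_def mcomm)
lemma join_ge1: "le a (join a b)" by (simp add: abs1 lat_le_def)
lemma join_ge2: "le b (join a b)" by (metis join_ge1 jcomm)
lemma join_lub: "le a c \<Longrightarrow> le b c \<Longrightarrow> le (join a b) c" by (metis jassoc le_join_iff)

lemma res2: "le (mult a b) c \<longleftrightarrow> le b (tld (mult (mn c) a))" using res res' by blast

lemma tld_mn: "tld (mn c) = c"
proof -
  have "\<And>b. le b c \<longleftrightarrow> le b (tld (mn c))" using res2[of one _ c] by (simp add: one_l one_r)
  thus ?thesis by (meson le_antisym le_refl)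
qed
lemma mn_tld: "mn (tld c) = c"
proof -
  have "\<And>b. le b c \<longleftrightarrow> le b (mn (tld c))" using res[of _ one c] by (simp add: one_l one_r)
  thus ?thesis by (meson le_antisym le_refl)
qed

lemma mono_l: "le a a' \<Longrightarrow> le (mult a b) (mult a' b)"
  by (meson le_refl le_trans res)
lemma mono_r: "le b b' \<Longrightarrow> le (mult a b) (mult a b')"
  by (meson le_refl le_trans res2)
lemma mono2: "le a a' \<Longrightarrow> le b b' \<Longrightarrow> le (mult a b) (mult a' b')"
  by (meson le_trans mono_l mono_r)

lemma tld_res: "le b (tld x) \<longleftrightarrow> le (mult x b) (tld one)"
  using res2[of x b "tld one"] by (simp add: mn_tld one_l)
lemma mn_res: "le a (mn y) \<longleftrightarrow> le (mult a y) (mn one)"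
  using res[of a y "mn one"] by (simp add: tld_mn one_r)

lemma tld1_mn1: "tld one = mn one"
proof -
  have "le (tld one) (mn one)" using mn_res[of one "tld one"] by (simp add: mn_tld le_refl one_l)
  moreover have "le (mn one) (tld one)" using tld_res[of one "mn one"] by (simp add: tld_mn le_refl one_r)
  ultimately show ?thesis by (rule le_antisym)
qed

lemma galois: "le a (mn y) \<longleftrightarrow> le y (tld a)"
  using mn_res tld_res tld1_mn1 by simp

lemma tld_anti: "le x y \<Longrightarrow> le (tld y) (tld x)"
  using galois[of x "tld y"] by (simp add: mn_tld)
lemma mn_anti: "le x y \<Longrightarrow> le (mn y) (mn x)"
  using galois[of "mn y" x] by (simp add: tld_mn)

lemma dist_r: "le (mult a (join x y)) (join (mult a x) (mult a y))"
proof -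
  let ?c = "join (mult a x) (mult a y)"
  have "le x (tld (mult (mn ?c) a))" using res2 join_ge1 by blast
  moreover have "le y (tld (mult (mn ?c) a))" using res2 join_ge2 by blast
  ultimately show ?thesis using res2 join_lub by blast
qed
lemma dist_l: "le (mult (join x y) a) (join (mult x a) (mult y a))"
proof -
  let ?c = "join (mult x a) (mult y a)"
  have "le x (mn (mult a (tld ?c)))" using res join_ge1 by blast
  moreover have "le y (mn (mult a (tld ?c)))" using res join_ge2 by blast
  ultimately show ?thesis using res join_lub by blast
qed

lemma key5: "le h (mn (mult f g)) \<longleftrightarrow> le g (tld (mult h f))"
proof -
  have "le h (mn (mult f g)) \<longleftrightarrow> le (mult h (mult f g)) (mn one)" by (rule mn_res)
  also have "\<dots> \<longleftrightarrow> le (mult (mult h f) g) (tld one)" by (simp only: passoc tld1_mn1)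
  also have "\<dots> \<longleftrightarrow> le g (tld (mult h f))" using tld_res by blast
  finally show ?thesis .
qed


abbreviation W where "W \<equiv> gen_prime_filters meet join"

lemma W_upset: "F \<in> W \<Longrightarrow> a \<in> F \<Longrightarrow> le a b \<Longrightarrow> b \<in> F"
  unfolding gen_prime_filters_def prime_filter_def by auto
lemma W_meet: "F \<in> W \<Longrightarrow> a \<in> F \<Longrightarrow> b \<in> F \<Longrightarrow> meet a b \<in> F"
  unfolding gen_prime_filters_def prime_filter_def by auto
lemma W_prime: "F \<in> W \<Longrightarrow> join a b \<in> F \<Longrightarrow> a \<in> F \<or> b \<in> F"
  unfolding gen_prime_filters_def prime_filter_def by auto

definition filt where "filt K \<longleftrightarrow> (\<forall>a b. a \<in> K \<and> le a b \<longrightarrow> b \<in> K) \<and> (\<forall>a b. a \<in> K \<and> b \<in> K \<longrightarrow> meet a b \<in> K)"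

lemma ext_lemma:
  fixes g :: "'a \<Rightarrow> 'a \<Rightarrow> 'a" and F D H :: "'a set"
  assumes g1: "\<And>a a' f. le a a' \<Longrightarrow> le (g a f) (g a' f)"
    and g2: "\<And>a f f'. le f f' \<Longrightarrow> le (g a f) (g a f')"
    and gd: "\<And>a b f. le (g (join a b) f) (join (g a f) (g b f))"
    and FM: "\<And>f1 f2. f1 \<in> F \<Longrightarrow> f2 \<in> F \<Longrightarrow> meet f1 f2 \<in> F"
    and H: "H \<in> W" and Dne: "D \<noteq> {}" and Df: "filt D"
    and DH: "\<And>d f. d \<in> D \<Longrightarrow> f \<in> F \<Longrightarrow> g d f \<in> H"
  shows "\<exists>K\<in>W. D \<subseteq> K \<and> (\<forall>k\<in>K. \<forall>f\<in>F. g k f \<in> H)"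
proof -
  define AA where "AA = {K. D \<subseteq> K \<and> filt K \<and> (\<forall>k\<in>K. \<forall>f\<in>F. g k f \<in> H)}"
  have "\<exists>M\<in>AA. \<forall>X\<in>AA. M \<subseteq> X \<longrightarrow> X = M"
  proof (rule subset_Zorn_nonempty)
    show "AA \<noteq> {}" using Df DH unfolding AA_def by blast
  next
    fix C assume Cne: "C \<noteq> {}" and ch: "subset.chain AA C"
    have CA: "C \<subseteq> AA" and cmp: "\<And>X Y. X \<in> C \<Longrightarrow> Y \<in> C \<Longrightarrow> X \<subseteq> Y \<or> Y \<subseteq> X"
      using ch unfolding subset.chain_def by auto
    have "D \<subseteq> \<Union>C"
    proof -
      obtain X where "X \<in> C" using Cne by blast
      hence "D \<subseteq> X" using CA unfolding AA_def by blast
      thus ?thesis using \<open>X \<in> C\<close> by blast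
    qed
    moreover have "filt (\<Union>C)"
      unfolding filt_def
    proof (intro conjI allI impI)
      fix a b assume "a \<in> \<Union>C \<and> le a b"
      then obtain X where "X \<in> C" "a \<in> X" "le a b" by auto
      moreover have "filt X" using \<open>X \<in> C\<close> CA unfolding AA_def by auto
      ultimately show "b \<in> \<Union>C" unfolding filt_def by blast
    next
      fix a b assume "a \<in> \<Union>C \<and> b \<in> \<Union>C"
      then obtain X Y where XY: "X \<in> C" "Y \<in> C" "a \<in> X" "b \<in> Y" by auto
      show "meet a b \<in> \<Union>C"
      proof (cases "X \<subseteq> Y")
        case True
        have "filt Y" using XY CA unfolding AA_def by auto
        thus ?thesis using True XY unfolding filt_def by blast
      next
        case False
        hence "Y \<subseteq> X" using cmp XY by blast
        have "filt X" using XY CA unfolding AA_def by auto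
        thus ?thesis using \<open>Y \<subseteq> X\<close> XY unfolding filt_def by blast
      qed
    qed
    moreover have "\<forall>k\<in>\<Union>C. \<forall>f\<in>F. g k f \<in> H" using CA unfolding AA_def by blast
    ultimately show "\<Union>C \<in> AA" unfolding AA_def by blast
  qed
  then obtain M where MA: "M \<in> AA" and Mmax: "\<And>X. X \<in> AA \<Longrightarrow> M \<subseteq> X \<Longrightarrow> X = M" by blast
  have DM: "D \<subseteq> M" and Mf: "filt M" and MH: "\<And>k f. k \<in> M \<Longrightarrow> f \<in> F \<Longrightarrow> g k f \<in> H"
    using MA unfolding AA_def by auto
  have Mup: "\<And>a b. a \<in> M \<Longrightarrow> le a b \<Longrightarrow> b \<in> M" and Mme: "\<And>a b. a \<in> M \<Longrightarrow> b \<in> M \<Longrightarrow> meet a b \<in> M"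
    using Mf unfolding filt_def by auto
  have Hup: "\<And>a b. a \<in> H \<Longrightarrow> le a b \<Longrightarrow> b \<in> H" using W_upset H by blast
  have Hpr: "\<And>a b. join a b \<in> H \<Longrightarrow> a \<in> H \<or> b \<in> H" using W_prime H by blast
  have fail: "\<exists>m\<in>M. \<exists>f\<in>F. g (meet m a) f \<notin> H" if aM: "a \<notin> M" for a
  proof (rule ccontr)
    assume nf: "\<not> ?thesis"
    define Ma where "Ma = {x. \<exists>m\<in>M. le (meet m a) x}"
    have "M \<subseteq> Ma" unfolding Ma_def using meet_le1 by blast
    moreover have "filt Ma" unfolding filt_def Ma_def
    proof (intro conjI allI impI)
      fix x y assume "x \<in> {x. \<exists>m\<in>M. le (meet m a) x} \<and> le x y"
      thus "y \<in> {x. \<exists>m\<in>M. le (meet m a) x}" using le_trans by blast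
    next
      fix x y assume "x \<in> {x. \<exists>m\<in>M. le (meet m a) x} \<and> y \<in> {x. \<exists>m\<in>M. le (meet m a) x}"
      then obtain m1 m2 where m: "m1 \<in> M" "m2 \<in> M" "le (meet m1 a) x" "le (meet m2 a) y" by auto
      have "le (meet (meet m1 m2) a) x"
        by (meson le_trans m(3) meet_glb meet_le1 meet_le2)
      moreover have "le (meet (meet m1 m2) a) y"
        by (meson le_trans m(4) meet_glb meet_le1 meet_le2)
      ultimately show "meet x y \<in> {x. \<exists>m\<in>M. le (meet m a) x}" using Mme m meet_glb by blast
    qed
    moreover have "\<forall>k\<in>Ma. \<forall>f\<in>F. g k f \<in> H"
    proof (intro ballI)
      fix k f assume "k \<in> Ma" "f \<in> F"
      then obtain m where "m \<in> M" "le (meet m a) k" unfolding Ma_def by auto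
      hence "g (meet m a) f \<in> H" using nf \<open>f \<in> F\<close> by blast
      thus "g k f \<in> H" using Hup g1 \<open>le (meet m a) k\<close> by blast
    qed
    ultimately have "Ma \<in> AA" using DM unfolding AA_def by blast
    hence "Ma = M" using Mmax \<open>M \<subseteq> Ma\<close> by blast
    moreover obtain d where "d \<in> D" using Dne by blast
    hence "a \<in> Ma" unfolding Ma_def using DM meet_le2 by blast
    ultimately show False using aM by blast
  qed
  have "M \<in> W"
  proof (cases "M = UNIV")
    case True thus ?thesis unfolding gen_prime_filters_def by auto
  next
    case False
    have "prime_filter meet join M" unfolding prime_filter_def
    proof (intro conjI allI impI)
      show "M \<noteq> {}" using DM Dne by blast
      show "M \<noteq> UNIV" by fact
    next
      fix a b assume "a \<in> M \<and> le a b" thus "b \<in> M" using Mup by blast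
    next
      fix a b assume "a \<in> M \<and> b \<in> M" thus "meet a b \<in> M" using Mme by blast
    next
      fix a b assume jab: "join a b \<in> M"
      show "a \<in> M \<or> b \<in> M"
      proof (rule ccontr)
        assume "\<not> (a \<in> M \<or> b \<in> M)"
        hence "a \<notin> M" "b \<notin> M" by auto
        obtain m1 f1 where x1: "m1 \<in> M" "f1 \<in> F" "g (meet m1 a) f1 \<notin> H"
          using fail[OF \<open>a \<notin> M\<close>] by blast
        obtain m2 f2 where x2: "m2 \<in> M" "f2 \<in> F" "g (meet m2 b) f2 \<notin> H"
          using fail[OF \<open>b \<notin> M\<close>] by blast
        define m where "m = meet m1 m2"
        define f where "f = meet f1 f2"
        have "le (meet m a) (meet m1 a)" unfolding m_def
          by (rule meet_glb, rule le_trans[OF meet_le1 meet_le1], rule meet_le2)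
        hence "le (g (meet m a) f) (g (meet m1 a) f)" by (rule g1)
        moreover have "le (g (meet m1 a) f) (g (meet m1 a) f1)" unfolding f_def by (rule g2, rule meet_le1)
        ultimately have "le (g (meet m a) f) (g (meet m1 a) f1)" by (rule le_trans)
        hence na: "g (meet m a) f \<notin> H" using x1 Hup by blast
        have "le (meet m b) (meet m2 b)" unfolding m_def
          by (rule meet_glb, rule le_trans[OF meet_le1 meet_le2], rule meet_le2)
        hence "le (g (meet m b) f) (g (meet m2 b) f)" by (rule g1)
        moreover have "le (g (meet m2 b) f) (g (meet m2 b) f2)" unfolding f_def by (rule g2, rule meet_le2)
        ultimately have "le (g (meet m b) f) (g (meet m2 b) f2)" by (rule le_trans)
        hence nb: "g (meet m b) f \<notin> H" using x2 Hup by blast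
        have "join (g (meet m a) f) (g (meet m b) f) \<notin> H" using na nb Hpr by blast
        hence "g (join (meet m a) (meet m b)) f \<notin> H" using gd Hup by blast
        hence "g (meet m (join a b)) f \<notin> H" by (simp add: distr)
        moreover have "meet m (join a b) \<in> M" using Mme x1 x2 jab m_def by blast
        moreover have "f \<in> F" using FM x1 x2 f_def by blast
        ultimately show False using MH by blast
      qed
    qed
    thus ?thesis unfolding gen_prime_filters_def by auto
  qed
  thus ?thesis using DM MH by blast
qed

lemma neg_W:
  fixes n n' :: "'a \<Rightarrow> 'a"
  assumes i1: "\<And>a. n (n' a) = a" and i2: "\<And>a. n' (n a) = a"
    and a1: "\<And>x y. le x y \<Longrightarrow> le (n y) (n x)" and a2: "\<And>x y. le x y \<Longrightarrow> le (n' y) (n' x)"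
    and F: "F \<in> W"
  shows "cf_neg n F \<in> W"
proof -
  have eq: "cf_neg n F = {x. n' x \<notin> F}" unfolding cf_neg_def by (metis i1 i2)
  show ?thesis
  proof (cases "F = UNIV \<or> F = {}")
    case True thus ?thesis unfolding eq gen_prime_filters_def by auto
  next
    case False
    hence pf: "prime_filter meet join F" using F unfolding gen_prime_filters_def by auto
    have "prime_filter meet join {x. n' x \<notin> F}" unfolding prime_filter_def
    proof (intro conjI allI impI)
      show "{x. n' x \<notin> F} \<noteq> {}" using False i2 by (metis empty_Collect_eq UNIV_eq_I)
      show "{x. n' x \<notin> F} \<noteq> UNIV" using False i2 by (metis UNIV_I ex_in_conv mem_Collect_eq)
    next
      fix a b assume "a \<in> {x. n' x \<notin> F} \<and> le a b"
      thus "b \<in> {x. n' x \<notin> F}" using W_upset[OF F] a2 by blast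
    next
      fix a b assume ab: "a \<in> {x. n' x \<notin> F} \<and> b \<in> {x. n' x \<notin> F}"
      let ?z = "n (join (n' a) (n' b))"
      have "le ?z a" using a1[OF join_ge1[of "n' a" "n' b"]] i1 by simp
      moreover have "le ?z b" using a1[OF join_ge2[of "n' b" "n' a"]] i1 by simp
      ultimately have "le ?z (meet a b)" by (rule meet_glb)
      hence "le (n' (meet a b)) (join (n' a) (n' b))" using a2 i2 by metis
      thus "meet a b \<in> {x. n' x \<notin> F}" using ab W_upset[OF F] W_prime[OF F] by blast
    next
      fix a b assume ab: "join a b \<in> {x. n' x \<notin> F}"
      show "a \<in> {x. n' x \<notin> F} \<or> b \<in> {x. n' x \<notin> F}"
      proof (rule ccontr)
        assume "\<not> ?thesis"
        hence "meet (n' a) (n' b) \<in> F" using W_meet[OF F] by blast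
        moreover
        let ?z = "n (meet (n' a) (n' b))"
        have "le a ?z" using a1[OF meet_le1[of "n' a" "n' b"]] i1 by simp
        moreover have "le b ?z" using a1[OF meet_le2[of "n' a" "n' b"]] i1 by simp
        ultimately have "le (join a b) ?z" "meet (n' a) (n' b) \<in> F" using join_lub by auto
        hence "le (meet (n' a) (n' b)) (n' (join a b))" using a2 i2 by metis
        thus False using ab W_upset[OF F] \<open>meet (n' a) (n' b) \<in> F\<close> by blast
      qed
    qed
    thus ?thesis unfolding eq gen_prime_filters_def by auto
  qed
qed


lemma neg_tld_mem: "t \<in> cf_neg tld F \<longleftrightarrow> mn t \<notin> F"
proof
  assume "t \<in> cf_neg tld F"
  then obtain a where "t = tld a" "a \<notin> F" unfolding cf_neg_def by blast
  thus "mn t \<notin> F" by (simp add: mn_tld)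
next
  assume "mn t \<notin> F"
  moreover have "t = tld (mn t)" by (simp add: tld_mn)
  ultimately show "t \<in> cf_neg tld F" unfolding cf_neg_def by blast
qed
lemma neg_mn_mem: "t \<in> cf_neg mn F \<longleftrightarrow> tld t \<notin> F"
proof
  assume "t \<in> cf_neg mn F"
  then obtain a where "t = mn a" "a \<notin> F" unfolding cf_neg_def by blast
  thus "tld t \<notin> F" by (simp add: tld_mn)
next
  assume "tld t \<notin> F"
  moreover have "t = mn (tld t)" by (simp add: mn_tld)
  ultimately show "t \<in> cf_neg mn F" unfolding cf_neg_def by blast
qed

lemma circ_mem: "H \<in> cf_circ meet join mult F G \<longleftrightarrow> H \<in> W \<and> (\<forall>a\<in>F. \<forall>b\<in>G. mult a b \<in> H)"
  unfolding cf_circ_def by blast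

lemma tld_W: "F \<in> W \<Longrightarrow> cf_neg tld F \<in> W"
  by (rule neg_W[where n=tld and n'=mn]) (simp_all add: tld_mn mn_tld tld_anti mn_anti)
lemma mn_W: "F \<in> W \<Longrightarrow> cf_neg mn F \<in> W"
  by (rule neg_W[where n=mn and n'=tld]) (simp_all add: tld_mn mn_tld tld_anti mn_anti)

lemma filt_up1: "filt {d. le one d}"
  unfolding filt_def using le_trans meet_glb by blast

lemma F1a: assumes x: "x \<in> W" and y: "y \<in> W" and xy: "x \<subseteq> y"
  shows "\<exists>a\<in>cfI meet join one. y \<in> cf_circ meet join mult a x"
proof -
  have "\<exists>K\<in>W. {d. le one d} \<subseteq> K \<and> (\<forall>k\<in>K. \<forall>f\<in>x. mult k f \<in> y)"
  proof (rule ext_lemma)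
    show "{d. le one d} \<noteq> {}" using le_refl by blast
    show "filt {d. le one d}" by (rule filt_up1)
    fix d f assume "d \<in> {d. le one d}" "f \<in> x"
    hence "le (mult one f) (mult d f)" using mono_l by blast
    thus "mult d f \<in> y" using \<open>f \<in> x\<close> xy W_upset[OF y] one_l by auto
  qed (use mono_l mono_r dist_l W_meet[OF x] y in auto)
  then obtain K where "K \<in> W" "one \<in> K" "\<forall>k\<in>K. \<forall>f\<in>x. mult k f \<in> y" using le_refl by blast
  thus ?thesis unfolding cfI_def circ_mem using y by blast
qed

lemma F1b: assumes x: "x \<in> W" and y: "y \<in> W" and xy: "x \<subseteq> y"
  shows "\<exists>a\<in>cfI meet join one. y \<in> cf_circ meet join mult x a"
proof -
  have "\<exists>K\<in>W. {d. le one d} \<subseteq> K \<and> (\<forall>k\<in>K. \<forall>f\<in>x. mult f k \<in> y)"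
  proof (rule ext_lemma)
    show "{d. le one d} \<noteq> {}" using le_refl by blast
    show "filt {d. le one d}" by (rule filt_up1)
    fix d f assume "d \<in> {d. le one d}" "f \<in> x"
    hence "le (mult f one) (mult f d)" using mono_r by blast
    thus "mult f d \<in> y" using \<open>f \<in> x\<close> xy W_upset[OF y] one_r by auto
  qed (use mono_l mono_r dist_r W_meet[OF x] y in auto)
  then obtain K where "K \<in> W" "one \<in> K" "\<forall>k\<in>K. \<forall>f\<in>x. mult f k \<in> y" using le_refl by blast
  thus ?thesis unfolding cfI_def circ_mem using y by blast
qed

lemma F1c: assumes "a \<in> cfI meet join one" "y \<in> cf_circ meet join mult a x" shows "x \<subseteq> y"
  using assms unfolding cfI_def circ_mem using one_l by force
lemma F1d: assumes "a \<in> cfI meet join one" "y \<in> cf_circ meet join mult x a" shows "x \<subseteq> y"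
  using assms unfolding cfI_def circ_mem using one_r by force

lemma F4a: assumes x: "x \<in> W" and y: "y \<in> W" and z: "z \<in> W" and K: "K \<in> W"
  and H: "H \<in> W" and xyK: "\<forall>a\<in>x. \<forall>b\<in>y. mult a b \<in> K" and KzH: "\<forall>a\<in>K. \<forall>b\<in>z. mult a b \<in> H"
  shows "\<exists>K'\<in>W. (\<forall>a\<in>y. \<forall>b\<in>z. mult a b \<in> K') \<and> (\<forall>a\<in>x. \<forall>b\<in>K'. mult a b \<in> H)"
proof -
  define D where "D = {d. \<exists>g\<in>y. \<exists>w\<in>z. le (mult g w) d}"
  show ?thesis
  proof (cases "D = {}")
    case True
    have "\<forall>a\<in>y. \<forall>b\<in>z. mult a b \<in> {}"
    proof (intro ballI)
      fix a b assume "a \<in> y" "b \<in> z"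
      moreover have "le (mult a b) (mult a b)" by (rule le_refl)
      ultimately have "mult a b \<in> D" unfolding D_def by blast
      thus "mult a b \<in> {}" using True by blast
    qed
    moreover have "{} \<in> W" unfolding gen_prime_filters_def by auto
    ultimately show ?thesis by blast
  next
    case False
    have "\<exists>K'\<in>W. D \<subseteq> K' \<and> (\<forall>k\<in>K'. \<forall>f\<in>x. mult f k \<in> H)"
    proof (rule ext_lemma)
      show "D \<noteq> {}" by fact
      show "filt D" unfolding filt_def D_def
      proof (intro conjI allI impI)
        fix a b assume "a \<in> {d. \<exists>g\<in>y. \<exists>w\<in>z. le (mult g w) d} \<and> le a b"
        thus "b \<in> {d. \<exists>g\<in>y. \<exists>w\<in>z. le (mult g w) d}" using le_trans by blast
      next
        fix a b assume "a \<in> {d. \<exists>g\<in>y. \<exists>w\<in>z. le (mult g w) d} \<and> b \<in> {d. \<exists>g\<in>y. \<exists>w\<in>z. le (mult g w) d}"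
        then obtain g1 w1 g2 w2 where gw: "g1 \<in> y" "w1 \<in> z" "le (mult g1 w1) a"
          "g2 \<in> y" "w2 \<in> z" "le (mult g2 w2) b" by blast
        have "le (mult (meet g1 g2) (meet w1 w2)) a"
          using le_trans[OF mono2[OF meet_le1 meet_le1] gw(3)] .
        moreover have "le (mult (meet g1 g2) (meet w1 w2)) b"
          using le_trans[OF mono2[OF meet_le2 meet_le2] gw(6)] .
        ultimately have "le (mult (meet g1 g2) (meet w1 w2)) (meet a b)" by (rule meet_glb)
        moreover have "meet g1 g2 \<in> y" "meet w1 w2 \<in> z"
          using W_meet[OF y gw(1) gw(4)] W_meet[OF z gw(2) gw(5)] by auto
        ultimately show "meet a b \<in> {d. \<exists>g\<in>y. \<exists>w\<in>z. le (mult g w) d}" by blast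
      qed
      fix d f assume "d \<in> D" "f \<in> x"
      then obtain g w where gw: "g \<in> y" "w \<in> z" "le (mult g w) d" unfolding D_def by blast
      have "mult (mult f g) w \<in> H" using KzH xyK gw \<open>f \<in> x\<close> by blast
      moreover have "le (mult (mult f g) w) (mult f d)" using mono_r[OF gw(3), of f] passoc by simp
      ultimately show "mult f d \<in> H" using W_upset[OF H] by blast
    qed (use mono_l mono_r dist_r W_meet[OF x] H in auto)
    then obtain K' where K'W: "K' \<in> W" and DK: "D \<subseteq> K'" and KH: "\<forall>k\<in>K'. \<forall>f\<in>x. mult f k \<in> H"
      by (elim bexE conjE)
    have allD: "\<forall>a\<in>y. \<forall>b\<in>z. mult a b \<in> D"
    proof (intro ballI)
      fix a b assume ab: "a \<in> y" "b \<in> z"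
      have "le (mult a b) (mult a b)" by (rule le_refl)
      thus "mult a b \<in> D" unfolding D_def using ab by blast
    qed
    show ?thesis
    proof (rule bexI[OF _ K'W], rule conjI)
      show "\<forall>a\<in>y. \<forall>b\<in>z. mult a b \<in> K'" using allD DK by blast
      show "\<forall>a\<in>x. \<forall>b\<in>K'. mult a b \<in> H" using KH by blast
    qed
  qed
qed

lemma F4b: assumes x: "x \<in> W" and y: "y \<in> W" and z: "z \<in> W" and K: "K \<in> W"
  and H: "H \<in> W" and yzK: "\<forall>a\<in>y. \<forall>b\<in>z. mult a b \<in> K" and xKH: "\<forall>a\<in>x. \<forall>b\<in>K. mult a b \<in> H"
  shows "\<exists>K'\<in>W. (\<forall>a\<in>x. \<forall>b\<in>y. mult a b \<in> K') \<and> (\<forall>a\<in>K'. \<forall>b\<in>z. mult a b \<in> H)"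
proof -
  define D where "D = {d. \<exists>g\<in>x. \<exists>w\<in>y. le (mult g w) d}"
  show ?thesis
  proof (cases "D = {}")
    case True
    have "\<forall>a\<in>x. \<forall>b\<in>y. mult a b \<in> {}"
    proof (intro ballI)
      fix a b assume "a \<in> x" "b \<in> y"
      moreover have "le (mult a b) (mult a b)" by (rule le_refl)
      ultimately have "mult a b \<in> D" unfolding D_def by blast
      thus "mult a b \<in> {}" using True by blast
    qed
    moreover have "{} \<in> W" unfolding gen_prime_filters_def by auto
    ultimately show ?thesis by blast
  next
    case False
    have "\<exists>K'\<in>W. D \<subseteq> K' \<and> (\<forall>k\<in>K'. \<forall>f\<in>z. mult k f \<in> H)"
    proof (rule ext_lemma)
      show "D \<noteq> {}" by fact
      show "filt D" unfolding filt_def D_def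
      proof (intro conjI allI impI)
        fix a b assume "a \<in> {d. \<exists>g\<in>x. \<exists>w\<in>y. le (mult g w) d} \<and> le a b"
        thus "b \<in> {d. \<exists>g\<in>x. \<exists>w\<in>y. le (mult g w) d}" using le_trans by blast
      next
        fix a b assume "a \<in> {d. \<exists>g\<in>x. \<exists>w\<in>y. le (mult g w) d} \<and> b \<in> {d. \<exists>g\<in>x. \<exists>w\<in>y. le (mult g w) d}"
        then obtain g1 w1 g2 w2 where gw: "g1 \<in> x" "w1 \<in> y" "le (mult g1 w1) a"
          "g2 \<in> x" "w2 \<in> y" "le (mult g2 w2) b" by blast
        have "le (mult (meet g1 g2) (meet w1 w2)) a"
          using le_trans[OF mono2[OF meet_le1 meet_le1] gw(3)] .
        moreover have "le (mult (meet g1 g2) (meet w1 w2)) b"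
          using le_trans[OF mono2[OF meet_le2 meet_le2] gw(6)] .
        ultimately have "le (mult (meet g1 g2) (meet w1 w2)) (meet a b)" by (rule meet_glb)
        moreover have "meet g1 g2 \<in> x" "meet w1 w2 \<in> y"
          using W_meet[OF x gw(1) gw(4)] W_meet[OF y gw(2) gw(5)] by auto
        ultimately show "meet a b \<in> {d. \<exists>g\<in>x. \<exists>w\<in>y. le (mult g w) d}" by blast
      qed
      fix d f assume "d \<in> D" "f \<in> z"
      then obtain g w where gw: "g \<in> x" "w \<in> y" "le (mult g w) d" unfolding D_def by blast
      have "mult g (mult w f) \<in> H" using yzK xKH gw \<open>f \<in> z\<close> by blast
      moreover have "le (mult g (mult w f)) (mult d f)" using mono_l[OF gw(3), of f] passoc by simp
      ultimately show "mult d f \<in> H" using W_upset[OF H] by blast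
    qed (use mono_l mono_r dist_l W_meet[OF z] H in auto)
    then obtain K' where K'W: "K' \<in> W" and DK: "D \<subseteq> K'" and KH: "\<forall>k\<in>K'. \<forall>f\<in>z. mult k f \<in> H"
      by (elim bexE conjE)
    have allD: "\<forall>a\<in>x. \<forall>b\<in>y. mult a b \<in> D"
    proof (intro ballI)
      fix a b assume ab: "a \<in> x" "b \<in> y"
      have "le (mult a b) (mult a b)" by (rule le_refl)
      thus "mult a b \<in> D" unfolding D_def using ab by blast
    qed
    show ?thesis
    proof (rule bexI[OF _ K'W], rule conjI)
      show "\<forall>a\<in>x. \<forall>b\<in>y. mult a b \<in> K'" using allD DK by blast
      show "\<forall>a\<in>K'. \<forall>b\<in>z. mult a b \<in> H" using KH by blast
    qed
  qed
qed

lemma F5: assumes x: "x \<in> W" and y: "y \<in> W" and z: "z \<in> W"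
  shows "cf_neg tld z \<in> cf_circ meet join mult x y \<longleftrightarrow> cf_neg mn y \<in> cf_circ meet join mult z x"
proof -
  have "cf_neg tld z \<in> cf_circ meet join mult x y \<longleftrightarrow> (\<forall>f\<in>x. \<forall>g\<in>y. mn (mult f g) \<notin> z)"
    unfolding circ_mem neg_tld_mem using tld_W[OF z] by blast
  moreover have "cf_neg mn y \<in> cf_circ meet join mult z x \<longleftrightarrow> (\<forall>h\<in>z. \<forall>f\<in>x. tld (mult h f) \<notin> y)"
    unfolding circ_mem neg_mn_mem using mn_W[OF y] by blast
  moreover have "(\<forall>f\<in>x. \<forall>g\<in>y. mn (mult f g) \<notin> z) \<longleftrightarrow> (\<forall>h\<in>z. \<forall>f\<in>x. tld (mult h f) \<notin> y)"
  proof
    assume L: "\<forall>f\<in>x. \<forall>g\<in>y. mn (mult f g) \<notin> z"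
    show "\<forall>h\<in>z. \<forall>f\<in>x. tld (mult h f) \<notin> y"
    proof (intro ballI notI)
      fix h f assume "h \<in> z" "f \<in> x" "tld (mult h f) \<in> y"
      have "le h (mn (mult f (tld (mult h f))))" using key5 le_refl by blast
      hence "mn (mult f (tld (mult h f))) \<in> z" using W_upset[OF z] \<open>h \<in> z\<close> by blast
      thus False using L \<open>f \<in> x\<close> \<open>tld (mult h f) \<in> y\<close> by blast
    qed
  next
    assume R: "\<forall>h\<in>z. \<forall>f\<in>x. tld (mult h f) \<notin> y"
    show "\<forall>f\<in>x. \<forall>g\<in>y. mn (mult f g) \<notin> z"
    proof (intro ballI notI)
      fix f g assume "f \<in> x" "g \<in> y" "mn (mult f g) \<in> z"
      have "le g (tld (mult (mn (mult f g)) f))" using key5 le_refl by blast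
      hence "tld (mult (mn (mult f g)) f) \<in> y" using W_upset[OF y] \<open>g \<in> y\<close> by blast
      thus False using R \<open>f \<in> x\<close> \<open>mn (mult f g) \<in> z\<close> by blast
    qed
  qed
  ultimately show ?thesis by simp
qed

lemma F6: "cf_neg mn (cf_neg tld x) = x" "cf_neg tld (cf_neg mn x) = x"
  by (auto simp: neg_tld_mem neg_mn_mem tld_mn mn_tld)

lemma set_op_I: "a \<in> U \<Longrightarrow> b \<in> V \<Longrightarrow> z \<in> c a b \<Longrightarrow> z \<in> set_op c U V"
  unfolding set_op_def by blast
lemma set_op_E: "z \<in> set_op c U V \<Longrightarrow> (\<And>a b. a \<in> U \<Longrightarrow> b \<in> V \<Longrightarrow> z \<in> c a b \<Longrightarrow> P) \<Longrightarrow> P"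
  unfolding set_op_def by blast

lemma set_op_mem: "z \<in> set_op c U V \<longleftrightarrow> (\<exists>a\<in>U. \<exists>b\<in>V. z \<in> c a b)"
  unfolding set_op_def by blast

lemma frame: "doubly_pointed_DInFL_frame_with_bounds W
           (cfI meet join one) (\<subseteq>) (cf_circ meet join mult) (cf_neg tld) (cf_neg mn)
           {} UNIV"
proof -
  have eW: "{} \<in> W" and uW: "UNIV \<in> W" unfolding gen_prime_filters_def by auto
  have IW: "cfI meet join one \<subseteq> W" unfolding cfI_def by auto
  have cW: "\<forall>x\<in>W. \<forall>y\<in>W. cf_circ meet join mult x y \<subseteq> W" unfolding cf_circ_def by auto
  have F1: "\<forall>x\<in>W. \<forall>y\<in>W. (x \<subseteq> y \<longleftrightarrow> y \<in> set_op (cf_circ meet join mult) (cfI meet join one) {x}) \<and>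
       (y \<in> set_op (cf_circ meet join mult) (cfI meet join one) {x} \<longleftrightarrow> y \<in> set_op (cf_circ meet join mult) {x} (cfI meet join one))"
  proof (intro ballI conjI)
    fix x y assume xy: "x \<in> W" "y \<in> W"
    have A: "x \<subseteq> y \<longleftrightarrow> (\<exists>a\<in>cfI meet join one. y \<in> cf_circ meet join mult a x)"
      using F1a[OF xy] F1c by blast
    have B: "x \<subseteq> y \<longleftrightarrow> (\<exists>a\<in>cfI meet join one. y \<in> cf_circ meet join mult x a)"
      using F1b[OF xy] F1d by blast
    have S1: "y \<in> set_op (cf_circ meet join mult) (cfI meet join one) {x} \<longleftrightarrow> (\<exists>a\<in>cfI meet join one. y \<in> cf_circ meet join mult a x)"
      unfolding set_op_mem by blast
    have S2: "y \<in> set_op (cf_circ meet join mult) {x} (cfI meet join one) \<longleftrightarrow> (\<exists>a\<in>cfI meet join one. y \<in> cf_circ meet join mult x a)"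
      unfolding set_op_mem by blast
    show "x \<subseteq> y \<longleftrightarrow> y \<in> set_op (cf_circ meet join mult) (cfI meet join one) {x}"
      unfolding S1 by (rule A)
    show "y \<in> set_op (cf_circ meet join mult) (cfI meet join one) {x} \<longleftrightarrow> y \<in> set_op (cf_circ meet join mult) {x} (cfI meet join one)"
      unfolding S1 S2 using A B by (rule trans[OF sym])
  qed
  have F2: "\<forall>x\<in>W. \<forall>y\<in>W. x \<subseteq> y \<and> x \<in> cfI meet join one \<longrightarrow> y \<in> cfI meet join one"
    unfolding cfI_def by blast
  have F3: "\<forall>u\<in>W. \<forall>v\<in>W. \<forall>x\<in>W. \<forall>y\<in>W. x \<subseteq> y \<and> x \<in> cf_circ meet join mult u v \<longrightarrow> y \<in> cf_circ meet join mult u v"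
    unfolding circ_mem by blast
  have F4: "\<forall>x\<in>W. \<forall>y\<in>W. \<forall>z\<in>W. set_op (cf_circ meet join mult) (cf_circ meet join mult x y) {z} =
      set_op (cf_circ meet join mult) {x} (cf_circ meet join mult y z)"
  proof (intro ballI)
    fix x y z assume xyz: "x \<in> W" "y \<in> W" "z \<in> W"
    show "set_op (cf_circ meet join mult) (cf_circ meet join mult x y) {z} =
      set_op (cf_circ meet join mult) {x} (cf_circ meet join mult y z)"
    proof (rule set_eqI)
      fix H
      show "H \<in> set_op (cf_circ meet join mult) (cf_circ meet join mult x y) {z} \<longleftrightarrow>
            H \<in> set_op (cf_circ meet join mult) {x} (cf_circ meet join mult y z)"
      proof
        assume "H \<in> set_op (cf_circ meet join mult) (cf_circ meet join mult x y) {z}"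
        then obtain K b where K0: "K \<in> cf_circ meet join mult x y" "b \<in> {z}" "H \<in> cf_circ meet join mult K b"
          by (rule set_op_E)
        hence Kc: "K \<in> cf_circ meet join mult x y" and Hc: "H \<in> cf_circ meet join mult K z" by auto
        have K: "K \<in> W" and k1: "\<forall>a\<in>x. \<forall>b\<in>y. mult a b \<in> K" using Kc unfolding circ_mem by auto
        have HW: "H \<in> W" and k2: "\<forall>a\<in>K. \<forall>b\<in>z. mult a b \<in> H" using Hc unfolding circ_mem by auto
        obtain K' where K': "K' \<in> W" "\<forall>a\<in>y. \<forall>b\<in>z. mult a b \<in> K'" "\<forall>a\<in>x. \<forall>b\<in>K'. mult a b \<in> H"
          using F4a[OF xyz K HW k1 k2] by (elim bexE conjE)
        have "K' \<in> cf_circ meet join mult y z" unfolding circ_mem using K' by auto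
        moreover have "H \<in> cf_circ meet join mult x K'" unfolding circ_mem using K' HW by auto
        ultimately show "H \<in> set_op (cf_circ meet join mult) {x} (cf_circ meet join mult y z)"
          by (intro set_op_I[of x]) auto
      next
        assume "H \<in> set_op (cf_circ meet join mult) {x} (cf_circ meet join mult y z)"
        then obtain a K where K0: "a \<in> {x}" "K \<in> cf_circ meet join mult y z" "H \<in> cf_circ meet join mult a K"
          by (rule set_op_E)
        hence Kc: "K \<in> cf_circ meet join mult y z" and Hc: "H \<in> cf_circ meet join mult x K" by auto
        have K: "K \<in> W" and k1: "\<forall>a\<in>y. \<forall>b\<in>z. mult a b \<in> K" using Kc unfolding circ_mem by auto
        have HW: "H \<in> W" and k2: "\<forall>a\<in>x. \<forall>b\<in>K. mult a b \<in> H" using Hc unfolding circ_mem by auto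
        obtain K' where K': "K' \<in> W" "\<forall>a\<in>x. \<forall>b\<in>y. mult a b \<in> K'" "\<forall>a\<in>K'. \<forall>b\<in>z. mult a b \<in> H"
          using F4b[OF xyz K HW k1 k2] by (elim bexE conjE)
        have "K' \<in> cf_circ meet join mult x y" unfolding circ_mem using K' by auto
        moreover have "H \<in> cf_circ meet join mult K' z" unfolding circ_mem using K' HW by auto
        ultimately show "H \<in> set_op (cf_circ meet join mult) (cf_circ meet join mult x y) {z}"
          by (intro set_op_I[of K']) auto
      qed
    qed
  qed
  have F5': "\<forall>x\<in>W. \<forall>y\<in>W. \<forall>z\<in>W. cf_neg tld z \<in> cf_circ meet join mult x y \<longleftrightarrow> cf_neg mn y \<in> cf_circ meet join mult z x"
    using F5 by blast
  have I1: "UNIV \<in> cfI meet join one" using uW unfolding cfI_def by blast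
  have I2: "{} \<notin> cfI meet join one" unfolding cfI_def by blast
  have o1: "\<forall>x\<in>W. x \<subseteq> x" and o2: "\<forall>x\<in>W. \<forall>y\<in>W. x \<subseteq> y \<and> y \<subseteq> x \<longrightarrow> x = y"
    and o3: "\<forall>x\<in>W. \<forall>y\<in>W. \<forall>z\<in>W. x \<subseteq> y \<and> y \<subseteq> z \<longrightarrow> x \<subseteq> z" by auto
  have t1: "\<forall>x\<in>W. cf_neg tld x \<in> W" and t2: "\<forall>x\<in>W. cf_neg mn x \<in> W" using tld_W mn_W by auto
  have F6': "\<forall>x\<in>W. cf_neg mn (cf_neg tld x) \<subseteq> x \<and> cf_neg tld (cf_neg mn x) \<subseteq> x" using F6 by auto
  have DF: "DInFL_frame W (cfI meet join one) (\<subseteq>) (cf_circ meet join mult) (cf_neg tld) (cf_neg mn)"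
    unfolding DInFL_frame_def by (intro conjI IW o1 o2 o3 cW t1 t2 F1 F2 F3 F4 F5' F6')
  have b: "\<forall>x\<in>W. {} \<subseteq> x \<and> x \<subseteq> UNIV" by auto
  have I3: "cfI meet join one \<noteq> {}" using I1 by blast
  have I4: "cfI meet join one \<noteq> W" using I2 eW by blast
  have I5: "\<forall>x\<in>cfI meet join one. \<forall>y\<in>W. x \<subseteq> y \<longrightarrow> y \<in> cfI meet join one"
    unfolding cfI_def by blast
  show ?thesis
    unfolding doubly_pointed_DInFL_frame_with_bounds_def
    by (intro conjI DF eW uW b I3 I4 I5)
qed

end

theorem mainTheorem18:
  fixes meet join mult :: "'a \<Rightarrow> 'a \<Rightarrow> 'a" and one :: 'a and tld mn :: "'a \<Rightarrow> 'a"
  assumes "DInFL_algebra meet join mult one tld mn"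
  shows "doubly_pointed_DInFL_frame_with_bounds (gen_prime_filters meet join)
           (cfI meet join one) (\<subseteq>) (cf_circ meet join mult) (cf_neg tld) (cf_neg mn)
           {} UNIV"
proof -
  interpret dinfl meet join mult one tld mn by (rule dinfl.intro) (rule assms)
  show ?thesis by (rule frame)
qed

end
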